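(* Let $\mathscr A$ be an additive category and $n\ge 2$. Let $X_0\xrightarrow{f_0}X_1\xrightarrow{f_1}X_2\xrightarrow{f_2}\cdots\xrightarrow{f_{n-1}}X_n$ and $X_0\xrightarrow{f_0}X_1\xrightarrow{g_1}X'_2\xrightarrow{g_2}\cdots\xrightarrow{g_{n-1}}X'_n$ be sequences of morphisms, and put $g_0:=f_0$. Let $\varphi_k\colon X_k\to X'_k$ for $2\le k\le n$ be morphisms with $\varphi_2f_1=g_1$ and $\varphi_{k+1}f_k=g_k\varphi_k$ for $2\le k\le n-1$; that is, together with $\varphi_0=\mathrm{id}_{X_0}$ and $\varphi_1=\mathrm{id}_{X_1}$ they form a commutative ladder. Assume: (i) $f_i$ is a weak cokernel of $f_{i-1}$ for $1\le i\le n-1$; (ii) $g_i$ is a weak cokernel of $g_{i-1}$ for $1\le i\le n-1$; (iii) $f_2,\dots,f_{n-1}$ and $g_2,\dots,g_{n-1}$ lie in the radical of $\mathscr A$. Then $\varphi_2,\dots,\varphi_{n-1}$ are isomorphisms.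
   Context: Composition of $f\colon X\to Y$ and $g\colon Y\to Z$ is written $gf$. A morphism $g$ is a weak cokernel of $f$ if $gf=0$ and every $h$ with $hf=0$ factors through $g$. The radical of an additive category is $\operatorname{rad}(X,Y)=\{f\colon X\to Y\mid \mathrm{id}_X-hf \text{ is invertible for all } h\colon Y\to X\}$. *)

theory Defs
  imports Main
begin

text \<open>Composition, addition,
zero and negation are indexed by the objects involved, so hom-sets may overlap.
Composition convention: Comp X Y Z g f is gf for f : X -> Y, g : Y -> Z.\<close>

record ('o, 'm) addcat =
  Obj  :: "'o set"
  Hom  :: "'o \<Rightarrow> 'o \<Rightarrow> 'm set"
  Comp :: "'o \<Rightarrow> 'o \<Rightarrow> 'o \<Rightarrow> 'm \<Rightarrow> 'm \<Rightarrow> 'm"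
  Id   :: "'o \<Rightarrow> 'm"
  Zero :: "'o \<Rightarrow> 'o \<Rightarrow> 'm"
  Add  :: "'o \<Rightarrow> 'o \<Rightarrow> 'm \<Rightarrow> 'm \<Rightarrow> 'm"
  Neg  :: "'o \<Rightarrow> 'o \<Rightarrow> 'm \<Rightarrow> 'm"

definition is_category :: "('o, 'm, 'x) addcat_scheme \<Rightarrow> bool" where
  "is_category C \<longleftrightarrow>
     (\<forall>X\<in>Obj C. Id C X \<in> Hom C X X) \<and>
     (\<forall>X\<in>Obj C. \<forall>Y\<in>Obj C. \<forall>Z\<in>Obj C. \<forall>f\<in>Hom C X Y. \<forall>g\<in>Hom C Y Z.
        Comp C X Y Z g f \<in> Hom C X Z) \<and>
     (\<forall>X\<in>Obj C. \<forall>Y\<in>Obj C. \<forall>f\<in>Hom C X Y.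
        Comp C X Y Y (Id C Y) f = f \<and> Comp C X X Y f (Id C X) = f) \<and>
     (\<forall>W\<in>Obj C. \<forall>X\<in>Obj C. \<forall>Y\<in>Obj C. \<forall>Z\<in>Obj C.
        \<forall>f\<in>Hom C W X. \<forall>g\<in>Hom C X Y. \<forall>h\<in>Hom C Y Z.
        Comp C W Y Z h (Comp C W X Y g f) = Comp C W X Z (Comp C X Y Z h g) f)"

definition is_preadditive :: "('o, 'm, 'x) addcat_scheme \<Rightarrow> bool" where
  "is_preadditive C \<longleftrightarrow> is_category C \<and>
     (\<forall>X\<in>Obj C. \<forall>Y\<in>Obj C.
        Zero C X Y \<in> Hom C X Y \<and>
        (\<forall>f\<in>Hom C X Y. \<forall>g\<in>Hom C X Y. Add C X Y f g \<in> Hom C X Y) \<and>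
        (\<forall>f\<in>Hom C X Y. Neg C X Y f \<in> Hom C X Y) \<and>
        (\<forall>f\<in>Hom C X Y. \<forall>g\<in>Hom C X Y. \<forall>h\<in>Hom C X Y.
           Add C X Y (Add C X Y f g) h = Add C X Y f (Add C X Y g h)) \<and>
        (\<forall>f\<in>Hom C X Y. \<forall>g\<in>Hom C X Y. Add C X Y f g = Add C X Y g f) \<and>
        (\<forall>f\<in>Hom C X Y. Add C X Y f (Zero C X Y) = f) \<and>
        (\<forall>f\<in>Hom C X Y. Add C X Y f (Neg C X Y f) = Zero C X Y)) \<and>
     (\<forall>X\<in>Obj C. \<forall>Y\<in>Obj C. \<forall>Z\<in>Obj C.
        (\<forall>f\<in>Hom C X Y. \<forall>g\<in>Hom C Y Z. \<forall>g'\<in>Hom C Y Z.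
           Comp C X Y Z (Add C Y Z g g') f = Add C X Z (Comp C X Y Z g f) (Comp C X Y Z g' f)) \<and>
        (\<forall>f\<in>Hom C X Y. \<forall>f'\<in>Hom C X Y. \<forall>g\<in>Hom C Y Z.
           Comp C X Y Z g (Add C X Y f f') = Add C X Z (Comp C X Y Z g f) (Comp C X Y Z g f')))"

definition is_biproduct ::
  "('o, 'm, 'x) addcat_scheme \<Rightarrow> 'o \<Rightarrow> 'o \<Rightarrow> 'o \<Rightarrow> 'm \<Rightarrow> 'm \<Rightarrow> 'm \<Rightarrow> 'm \<Rightarrow> bool" where
  "is_biproduct C A B S i1 i2 p1 p2 \<longleftrightarrow>
     S \<in> Obj C \<and> i1 \<in> Hom C A S \<and> i2 \<in> Hom C B S \<and> p1 \<in> Hom C S A \<and> p2 \<in> Hom C S B \<and>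
     Comp C A S A p1 i1 = Id C A \<and> Comp C B S B p2 i2 = Id C B \<and>
     Comp C B S A p1 i2 = Zero C B A \<and> Comp C A S B p2 i1 = Zero C A B \<and>
     Add C S S (Comp C S A S i1 p1) (Comp C S B S i2 p2) = Id C S"

definition is_additive_category :: "('o, 'm, 'x) addcat_scheme \<Rightarrow> bool" where
  "is_additive_category C \<longleftrightarrow> is_preadditive C \<and>
     (\<exists>Z\<in>Obj C. Id C Z = Zero C Z Z) \<and>
     (\<forall>A\<in>Obj C. \<forall>B\<in>Obj C. \<exists>S i1 i2 p1 p2. is_biproduct C A B S i1 i2 p1 p2)"

definition is_iso :: "('o, 'm, 'x) addcat_scheme \<Rightarrow> 'o \<Rightarrow> 'o \<Rightarrow> 'm \<Rightarrow> bool" where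
  "is_iso C X Y f \<longleftrightarrow> f \<in> Hom C X Y \<and>
     (\<exists>g\<in>Hom C Y X. Comp C X Y X g f = Id C X \<and> Comp C Y X Y f g = Id C Y)"

definition weak_cokernel ::
  "('o, 'm, 'x) addcat_scheme \<Rightarrow> 'o \<Rightarrow> 'o \<Rightarrow> 'o \<Rightarrow> 'm \<Rightarrow> 'm \<Rightarrow> bool" where
  "weak_cokernel C X Y Z f g \<longleftrightarrow> f \<in> Hom C X Y \<and> g \<in> Hom C Y Z \<and>
     Comp C X Y Z g f = Zero C X Z \<and>
     (\<forall>W\<in>Obj C. \<forall>h\<in>Hom C Y W. Comp C X Y W h f = Zero C X W \<longrightarrow>
        (\<exists>u\<in>Hom C Z W. h = Comp C Y Z W u g))"

definition in_radical :: "('o, 'm, 'x) addcat_scheme \<Rightarrow> 'o \<Rightarrow> 'o \<Rightarrow> 'm \<Rightarrow> bool" where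
  "in_radical C X Y f \<longleftrightarrow> f \<in> Hom C X Y \<and>
     (\<forall>h\<in>Hom C Y X. is_iso C X X (Add C X X (Id C X) (Neg C X X (Comp C X Y X h f))))"

end

theory Submission
  imports Defs
begin

locale PA =
  fixes C :: "('o, 'm, 'x) addcat_scheme"
  assumes pa: "is_preadditive C"
begin

lemma cat: "is_category C" using pa is_preadditive_def by blast

lemma id_hom: "X \<in> Obj C \<Longrightarrow> Id C X \<in> Hom C X X"
  using cat unfolding is_category_def by blast
lemma comp_hom: "\<lbrakk>X \<in> Obj C; Y \<in> Obj C; Z \<in> Obj C; f \<in> Hom C X Y; g \<in> Hom C Y Z\<rbrakk>
  \<Longrightarrow> Comp C X Y Z g f \<in> Hom C X Z"
  using cat unfolding is_category_def by blast
lemma id_l: "\<lbrakk>X \<in> Obj C; Y \<in> Obj C; f \<in> Hom C X Y\<rbrakk> \<Longrightarrow> Comp C X Y Y (Id C Y) f = f"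
  using cat unfolding is_category_def by blast
lemma id_r: "\<lbrakk>X \<in> Obj C; Y \<in> Obj C; f \<in> Hom C X Y\<rbrakk> \<Longrightarrow> Comp C X X Y f (Id C X) = f"
  using cat unfolding is_category_def by blast
lemma assoc: "\<lbrakk>W \<in> Obj C; X \<in> Obj C; Y \<in> Obj C; Z \<in> Obj C; f \<in> Hom C W X; g \<in> Hom C X Y; h \<in> Hom C Y Z\<rbrakk>
  \<Longrightarrow> Comp C W Y Z h (Comp C W X Y g f) = Comp C W X Z (Comp C X Y Z h g) f"
  using cat unfolding is_category_def by blast

lemma zero_hom: "\<lbrakk>X \<in> Obj C; Y \<in> Obj C\<rbrakk> \<Longrightarrow> Zero C X Y \<in> Hom C X Y"
  using pa unfolding is_preadditive_def by (metis (no_types, lifting))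
lemma add_hom: "\<lbrakk>X \<in> Obj C; Y \<in> Obj C; f \<in> Hom C X Y; g \<in> Hom C X Y\<rbrakk> \<Longrightarrow> Add C X Y f g \<in> Hom C X Y"
  using pa unfolding is_preadditive_def by (metis (no_types, lifting))
lemma neg_hom: "\<lbrakk>X \<in> Obj C; Y \<in> Obj C; f \<in> Hom C X Y\<rbrakk> \<Longrightarrow> Neg C X Y f \<in> Hom C X Y"
  using pa unfolding is_preadditive_def by (metis (no_types, lifting))
lemma add_assoc: "\<lbrakk>X \<in> Obj C; Y \<in> Obj C; f \<in> Hom C X Y; g \<in> Hom C X Y; h \<in> Hom C X Y\<rbrakk>
  \<Longrightarrow> Add C X Y (Add C X Y f g) h = Add C X Y f (Add C X Y g h)"
  using pa unfolding is_preadditive_def by (metis (no_types, lifting))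
lemma add_comm: "\<lbrakk>X \<in> Obj C; Y \<in> Obj C; f \<in> Hom C X Y; g \<in> Hom C X Y\<rbrakk> \<Longrightarrow> Add C X Y f g = Add C X Y g f"
  using pa unfolding is_preadditive_def by (metis (no_types, lifting))
lemma add_zero: "\<lbrakk>X \<in> Obj C; Y \<in> Obj C; f \<in> Hom C X Y\<rbrakk> \<Longrightarrow> Add C X Y f (Zero C X Y) = f"
  using pa unfolding is_preadditive_def by (metis (no_types, lifting))
lemma add_neg: "\<lbrakk>X \<in> Obj C; Y \<in> Obj C; f \<in> Hom C X Y\<rbrakk> \<Longrightarrow> Add C X Y f (Neg C X Y f) = Zero C X Y"
  using pa unfolding is_preadditive_def by (metis (no_types, lifting))
lemma distl: "\<lbrakk>X \<in> Obj C; Y \<in> Obj C; Z \<in> Obj C; f \<in> Hom C X Y; g \<in> Hom C Y Z; g' \<in> Hom C Y Z\<rbrakk>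
  \<Longrightarrow> Comp C X Y Z (Add C Y Z g g') f = Add C X Z (Comp C X Y Z g f) (Comp C X Y Z g' f)"
  using pa unfolding is_preadditive_def by (metis (no_types, lifting))
lemma distr: "\<lbrakk>X \<in> Obj C; Y \<in> Obj C; Z \<in> Obj C; f \<in> Hom C X Y; f' \<in> Hom C X Y; g \<in> Hom C Y Z\<rbrakk>
  \<Longrightarrow> Comp C X Y Z g (Add C X Y f f') = Add C X Z (Comp C X Y Z g f) (Comp C X Y Z g f')"
  using pa unfolding is_preadditive_def by (metis (no_types, lifting))

lemma add_cancel: 
  assumes "X \<in> Obj C" "Y \<in> Obj C" "a \<in> Hom C X Y" "b \<in> Hom C X Y" "c \<in> Hom C X Y"
    and "Add C X Y a b = Add C X Y a c"
  shows "b = c"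
proof -
  have n: "Neg C X Y a \<in> Hom C X Y" using assms neg_hom by blast
  have "b = Add C X Y (Add C X Y (Neg C X Y a) a) b"
    using assms n by (simp add: add_comm add_neg add_zero zero_hom)
  also have "\<dots> = Add C X Y (Neg C X Y a) (Add C X Y a b)" using assms n add_assoc by blast
  also have "\<dots> = Add C X Y (Neg C X Y a) (Add C X Y a c)" using assms by simp
  also have "\<dots> = Add C X Y (Add C X Y (Neg C X Y a) a) c" using assms n add_assoc by simp
  also have "\<dots> = c" using assms n by (simp add: add_comm add_neg add_zero zero_hom)
  finally show ?thesis .
qed

lemma zero_add: "\<lbrakk>X \<in> Obj C; Y \<in> Obj C; f \<in> Hom C X Y\<rbrakk> \<Longrightarrow> Add C X Y (Zero C X Y) f = f"
  by (simp add: add_comm add_zero zero_hom)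

lemma comp_zero_l:
  assumes "X \<in> Obj C" "Y \<in> Obj C" "Z \<in> Obj C" "f \<in> Hom C X Y"
  shows "Comp C X Y Z (Zero C Y Z) f = Zero C X Z"
proof -
  let ?z = "Comp C X Y Z (Zero C Y Z) f"
  have h: "?z \<in> Hom C X Z" using assms comp_hom zero_hom by blast
  have "Add C X Z ?z ?z = Comp C X Y Z (Add C Y Z (Zero C Y Z) (Zero C Y Z)) f"
    using assms by (simp add: distl zero_hom)
  also have "\<dots> = ?z" using assms by (simp add: add_zero zero_hom)
  finally have "Add C X Z ?z ?z = Add C X Z ?z (Zero C X Z)" using h assms by (simp add: add_zero)
  then show ?thesis using add_cancel[OF assms(1,3) h h zero_hom] assms by blast
qed

lemma comp_zero_r:
  assumes "X \<in> Obj C" "Y \<in> Obj C" "Z \<in> Obj C" "g \<in> Hom C Y Z"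
  shows "Comp C X Y Z g (Zero C X Y) = Zero C X Z"
proof -
  let ?z = "Comp C X Y Z g (Zero C X Y)"
  have h: "?z \<in> Hom C X Z" using assms comp_hom zero_hom by blast
  have "Add C X Z ?z ?z = Comp C X Y Z g (Add C X Y (Zero C X Y) (Zero C X Y))"
    using assms by (simp add: distr zero_hom)
  also have "\<dots> = ?z" using assms by (simp add: add_zero zero_hom)
  finally have "Add C X Z ?z ?z = Add C X Z ?z (Zero C X Z)" using h assms by (simp add: add_zero)
  then show ?thesis using add_cancel[OF assms(1,3) h h zero_hom] assms by blast
qed

lemma neg_neg:
  assumes "X \<in> Obj C" "Y \<in> Obj C" "x \<in> Hom C X Y"
  shows "Neg C X Y (Neg C X Y x) = x"
proof -
  have n: "Neg C X Y x \<in> Hom C X Y" using assms neg_hom by blast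
  have nn: "Neg C X Y (Neg C X Y x) \<in> Hom C X Y" using assms n neg_hom by blast
  have "Add C X Y (Neg C X Y x) (Neg C X Y (Neg C X Y x)) = Add C X Y (Neg C X Y x) x"
    using assms n by (simp add: add_neg add_comm)
  then show ?thesis using add_cancel[OF assms(1,2) n nn assms(3)] by blast
qed

lemma neg_add:
  assumes "X \<in> Obj C" "Y \<in> Obj C" "x \<in> Hom C X Y" "y \<in> Hom C X Y"
  shows "Neg C X Y (Add C X Y x y) = Add C X Y (Neg C X Y x) (Neg C X Y y)"
proof -
  have nx: "Neg C X Y x \<in> Hom C X Y" and ny: "Neg C X Y y \<in> Hom C X Y"
    and s: "Add C X Y x y \<in> Hom C X Y" using assms neg_hom add_hom by blast+
  have ns: "Neg C X Y (Add C X Y x y) \<in> Hom C X Y" using s assms neg_hom by blast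
  have s2: "Add C X Y (Neg C X Y x) (Neg C X Y y) \<in> Hom C X Y" using nx ny assms add_hom by blast
  have "Add C X Y (Add C X Y x y) (Add C X Y (Neg C X Y x) (Neg C X Y y))
      = Add C X Y x (Add C X Y y (Add C X Y (Neg C X Y y) (Neg C X Y x)))"
    using assms nx ny by (simp add: add_assoc add_comm add_hom)
  also have "\<dots> = Add C X Y x (Add C X Y (Add C X Y y (Neg C X Y y)) (Neg C X Y x))"
    using assms nx ny by (simp add: add_assoc)
  also have "\<dots> = Zero C X Y" using assms nx ny by (simp add: add_neg zero_add)
  finally have "Add C X Y (Add C X Y x y) (Neg C X Y (Add C X Y x y))
     = Add C X Y (Add C X Y x y) (Add C X Y (Neg C X Y x) (Neg C X Y y))"
    using assms s by (simp add: add_neg)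
  then show ?thesis using add_cancel[OF assms(1,2) s ns s2] by blast
qed

lemma neg_comp_l:
  assumes "X \<in> Obj C" "Y \<in> Obj C" "Z \<in> Obj C" "f \<in> Hom C X Y" "g \<in> Hom C Y Z"
  shows "Comp C X Y Z (Neg C Y Z g) f = Neg C X Z (Comp C X Y Z g f)"
proof -
  have ng: "Neg C Y Z g \<in> Hom C Y Z" using assms neg_hom by blast
  have gf: "Comp C X Y Z g f \<in> Hom C X Z" using assms comp_hom by blast
  have a: "Comp C X Y Z (Neg C Y Z g) f \<in> Hom C X Z" using assms ng comp_hom by blast
  have b: "Neg C X Z (Comp C X Y Z g f) \<in> Hom C X Z" using assms gf neg_hom by blast
  have "Add C X Z (Comp C X Y Z g f) (Comp C X Y Z (Neg C Y Z g) f)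
      = Comp C X Y Z (Add C Y Z g (Neg C Y Z g)) f" using assms ng by (simp add: distl)
  also have "\<dots> = Zero C X Z" using assms by (simp add: add_neg comp_zero_l)
  also have "\<dots> = Add C X Z (Comp C X Y Z g f) (Neg C X Z (Comp C X Y Z g f))"
    using assms gf by (simp add: add_neg)
  finally show ?thesis using add_cancel[OF assms(1,3) gf a b] by blast
qed

lemma neg_comp_r:
  assumes "X \<in> Obj C" "Y \<in> Obj C" "Z \<in> Obj C" "f \<in> Hom C X Y" "g \<in> Hom C Y Z"
  shows "Comp C X Y Z g (Neg C X Y f) = Neg C X Z (Comp C X Y Z g f)"
proof -
  have nf: "Neg C X Y f \<in> Hom C X Y" using assms neg_hom by blast
  have gf: "Comp C X Y Z g f \<in> Hom C X Z" using assms comp_hom by blast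
  have a: "Comp C X Y Z g (Neg C X Y f) \<in> Hom C X Z" using assms nf comp_hom by blast
  have b: "Neg C X Z (Comp C X Y Z g f) \<in> Hom C X Z" using assms gf neg_hom by blast
  have "Add C X Z (Comp C X Y Z g f) (Comp C X Y Z g (Neg C X Y f))
      = Comp C X Y Z g (Add C X Y f (Neg C X Y f))" using assms nf by (simp add: distr)
  also have "\<dots> = Zero C X Z" using assms by (simp add: add_neg comp_zero_r)
  also have "\<dots> = Add C X Z (Comp C X Y Z g f) (Neg C X Z (Comp C X Y Z g f))"
    using assms gf by (simp add: add_neg)
  finally show ?thesis using add_cancel[OF assms(1,3) gf a b] by blast
qed

lemma fix_iso:
  assumes W: "W \<in> Obj C" and Y: "Y \<in> Obj C" and Z: "Z \<in> Obj C" and rho: "rho \<in> Hom C Y Y"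
    and wc: "weak_cokernel C W Y Z a b" and rad: "in_radical C Y Z b"
    and fx: "Comp C W Y Y rho a = a"
  shows "is_iso C Y Y rho"
proof -
  have a: "a \<in> Hom C W Y" and b: "b \<in> Hom C Y Z" using wc unfolding weak_cokernel_def by simp_all
  have fac: "\<forall>V\<in>Obj C. \<forall>h\<in>Hom C Y V. Comp C W Y V h a = Zero C W V \<longrightarrow>
        (\<exists>u\<in>Hom C Z V. h = Comp C Y Z V u b)" using wc unfolding weak_cokernel_def by simp
  let ?D = "Add C Y Y (Id C Y) (Neg C Y Y rho)"
  have i: "Id C Y \<in> Hom C Y Y" using Y id_hom by blast
  have nr: "Neg C Y Y rho \<in> Hom C Y Y" using Y rho neg_hom by blast
  have D: "?D \<in> Hom C Y Y" using i nr Y add_hom by blast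
  have "Comp C W Y Y ?D a = Add C W Y (Comp C W Y Y (Id C Y) a) (Comp C W Y Y (Neg C Y Y rho) a)"
    using distl[OF W Y Y a i nr] .
  also have "\<dots> = Add C W Y a (Neg C W Y a)"
    using id_l[OF W Y a] neg_comp_l[OF W Y Y a rho] fx by simp
  also have "\<dots> = Zero C W Y" using W Y a add_neg by blast
  finally have "Comp C W Y Y ?D a = Zero C W Y" .
  then have "\<exists>u\<in>Hom C Z Y. ?D = Comp C Y Z Y u b" using fac Y D by blast
  then obtain h where h: "h \<in> Hom C Z Y" and hD: "?D = Comp C Y Z Y h b" by blast
  have ni: "Neg C Y Y (Id C Y) \<in> Hom C Y Y" using Y i neg_hom by blast
  have "Neg C Y Y ?D = Add C Y Y (Neg C Y Y (Id C Y)) (Neg C Y Y (Neg C Y Y rho))"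
    using neg_add[OF Y Y i nr] .
  also have "\<dots> = Add C Y Y (Neg C Y Y (Id C Y)) rho" using neg_neg[OF Y Y rho] by simp
  finally have "Add C Y Y (Id C Y) (Neg C Y Y ?D) = Add C Y Y (Id C Y) (Add C Y Y (Neg C Y Y (Id C Y)) rho)"
    by simp
  also have "\<dots> = Add C Y Y (Add C Y Y (Id C Y) (Neg C Y Y (Id C Y))) rho"
    using add_assoc[OF Y Y i ni rho] by simp
  also have "\<dots> = rho" using add_neg[OF Y Y i] zero_add[OF Y Y rho] by simp
  finally have "rho = Add C Y Y (Id C Y) (Neg C Y Y (Comp C Y Z Y h b))" using hD by simp
  then show ?thesis using rad h unfolding in_radical_def by simp
qed

lemma lr_iso:
  assumes X: "X \<in> Obj C" and Y: "Y \<in> Obj C" and f: "f \<in> Hom C X Y" and s: "s \<in> Hom C Y X"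
    and i1: "is_iso C X X (Comp C X Y X s f)" and i2: "is_iso C Y Y (Comp C Y X Y f s)"
  shows "is_iso C X Y f"
proof -
  obtain p where p: "p \<in> Hom C X X" and p1: "Comp C X X X p (Comp C X Y X s f) = Id C X"
    using i1 unfolding is_iso_def by blast
  obtain q where q: "q \<in> Hom C Y Y" and q1: "Comp C Y Y Y (Comp C Y X Y f s) q = Id C Y"
    using i2 unfolding is_iso_def by blast
  let ?L = "Comp C Y X X p s" and ?R = "Comp C Y Y X s q"
  have L: "?L \<in> Hom C Y X" and R: "?R \<in> Hom C Y X" using X Y p q s comp_hom by blast+
  have Lf: "Comp C X Y X ?L f = Id C X" using X Y p s f p1 by (simp add: assoc)
  have fR: "Comp C Y X Y f ?R = Id C Y" using X Y q s f q1 by (simp add: assoc)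
  have "?L = Comp C Y Y X ?L (Comp C Y X Y f ?R)" using fR L X Y by (simp add: id_r)
  also have "\<dots> = Comp C Y X X (Comp C X Y X ?L f) ?R" using X Y L R f assoc by blast
  also have "\<dots> = ?R" using Lf R X Y by (simp add: id_l)
  finally have "?L = ?R" .
  then show ?thesis unfolding is_iso_def using f R Lf fR by auto
qed

lemma ladder_iso:
  fixes Y :: "nat \<Rightarrow> 'o" and a th :: "nat \<Rightarrow> 'm" and n :: nat
  assumes obj: "\<forall>i\<le>n. Y i \<in> Obj C"
  and hom: "\<forall>i<n. a i \<in> Hom C (Y i) (Y (Suc i))"
  and wc: "\<forall>i. 1 \<le> i \<and> i \<le> n - 1 \<longrightarrow> weak_cokernel C (Y (i-1)) (Y i) (Y (Suc i)) (a (i-1)) (a i)"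
  and rad: "\<forall>i. 2 \<le> i \<and> i \<le> n - 1 \<longrightarrow> in_radical C (Y i) (Y (Suc i)) (a i)"
  and thhom: "\<forall>k. 2\<le>k \<and> k \<le> n-1 \<longrightarrow> th k \<in> Hom C (Y k) (Y k)"
  and th2: "Comp C (Y 1) (Y 2) (Y 2) (th 2) (a 1) = a 1"
  and thsq: "\<forall>k. 2\<le>k \<and> Suc k \<le> n-1 \<longrightarrow> Comp C (Y k) (Y (Suc k)) (Y (Suc k)) (th (Suc k)) (a k)
               = Comp C (Y k) (Y k) (Y (Suc k)) (a k) (th k)"
  shows "\<forall>k. 2\<le>k \<and> k\<le>n-1 \<longrightarrow> is_iso C (Y k) (Y k) (th k)"
proof -
  have P: "Suc (Suc j) \<le> n - 1 \<Longrightarrow> (\<exists>\<sigma> \<tau>. \<sigma> \<in> Hom C (Y (Suc (Suc j))) (Y (Suc (Suc j)))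
     \<and> \<tau> \<in> Hom C (Y (Suc j)) (Y (Suc j))
     \<and> Comp C (Y (Suc j)) (Y (Suc (Suc j))) (Y (Suc (Suc j))) \<sigma> (a (Suc j))
        = Comp C (Y (Suc j)) (Y (Suc j)) (Y (Suc (Suc j))) (a (Suc j)) \<tau>
     \<and> Comp C (Y (Suc (Suc j))) (Y (Suc (Suc j))) (Y (Suc (Suc j))) \<sigma> (th (Suc (Suc j))) = Id C (Y (Suc (Suc j)))
     \<and> Comp C (Y (Suc (Suc j))) (Y (Suc (Suc j))) (Y (Suc (Suc j))) (th (Suc (Suc j))) \<sigma> = Id C (Y (Suc (Suc j))))"
    for j
  proof (induction j)
    case 0
    have o: "Y 1 \<in> Obj C" "Y 2 \<in> Obj C" "Y 3 \<in> Obj C" using obj 0 by auto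
    have t: "th 2 \<in> Hom C (Y 2) (Y 2)" using thhom 0 by auto
    have a1: "a 1 \<in> Hom C (Y 1) (Y 2)" using hom[rule_format, of 1] 0 by (simp add: numeral_2_eq_2)
    have w: "weak_cokernel C (Y 1) (Y 2) (Y 3) (a 1) (a 2)" using wc[rule_format, of 2] 0
      by (simp add: numeral_2_eq_2 numeral_3_eq_3)
    have r: "in_radical C (Y 2) (Y 3) (a 2)" using rad[rule_format, of 2] 0
      by (simp add: numeral_3_eq_3)
    have "is_iso C (Y 2) (Y 2) (th 2)" using fix_iso[OF o t w r th2] .
    then obtain s where s: "s \<in> Hom C (Y 2) (Y 2)" "Comp C (Y 2) (Y 2) (Y 2) s (th 2) = Id C (Y 2)"
       "Comp C (Y 2) (Y 2) (Y 2) (th 2) s = Id C (Y 2)" unfolding is_iso_def by blast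
    have "Comp C (Y 1) (Y 2) (Y 2) s (a 1) = Comp C (Y 1) (Y 2) (Y 2) s (Comp C (Y 1) (Y 2) (Y 2) (th 2) (a 1))"
      using th2 by simp
    also have "\<dots> = a 1" using o s t a1 by (simp add: assoc id_l)
    also have "\<dots> = Comp C (Y 1) (Y 1) (Y 2) (a 1) (Id C (Y 1))" using o a1 by (simp add: id_r)
    finally have "Comp C (Y 1) (Y 2) (Y 2) s (a 1) = Comp C (Y 1) (Y 1) (Y 2) (a 1) (Id C (Y 1))" .
    moreover have "Id C (Y 1) \<in> Hom C (Y 1) (Y 1)" using o id_hom by blast
    ultimately show ?case using s by (auto simp: numeral_2_eq_2)
  next
    case (Suc j)
    define k where "k = Suc (Suc j)"
    have kk: "Suc k \<le> n - 1" "2 \<le> k" using Suc.prems k_def by auto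
    obtain \<sigma> \<tau> where st: "\<sigma> \<in> Hom C (Y k) (Y k)" "\<tau> \<in> Hom C (Y (k-1)) (Y (k-1))"
      "Comp C (Y (k-1)) (Y k) (Y k) \<sigma> (a (k-1)) = Comp C (Y (k-1)) (Y (k-1)) (Y k) (a (k-1)) \<tau>"
      "Comp C (Y k) (Y k) (Y k) \<sigma> (th k) = Id C (Y k)"
      "Comp C (Y k) (Y k) (Y k) (th k) \<sigma> = Id C (Y k)"
      using Suc k_def by auto
    have o: "Y (k-1) \<in> Obj C" "Y k \<in> Obj C" "Y (Suc k) \<in> Obj C" "Y (Suc (Suc k)) \<in> Obj C"
      using obj kk by auto
    have ak: "a k \<in> Hom C (Y k) (Y (Suc k))" "a (k-1) \<in> Hom C (Y (k-1)) (Y k)"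
      "a (Suc k) \<in> Hom C (Y (Suc k)) (Y (Suc (Suc k)))"
    proof -
      have "k < n" "Suc k < n" "k - 1 < n" "Suc (k-1) = k" using kk by auto
      then show "a k \<in> Hom C (Y k) (Y (Suc k))" "a (k-1) \<in> Hom C (Y (k-1)) (Y k)"
        "a (Suc k) \<in> Hom C (Y (Suc k)) (Y (Suc (Suc k)))"
        using hom[rule_format, of k] hom[rule_format, of "Suc k"] hom[rule_format, of "k-1"] by auto
    qed
    have t: "th k \<in> Hom C (Y k) (Y k)" "th (Suc k) \<in> Hom C (Y (Suc k)) (Y (Suc k))"
      using thhom kk by auto
    have w1: "weak_cokernel C (Y (k-1)) (Y k) (Y (Suc k)) (a (k-1)) (a k)"
      using wc[rule_format, of k] kk by simp
    have w2: "weak_cokernel C (Y k) (Y (Suc k)) (Y (Suc (Suc k))) (a k) (a (Suc k))"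
      using wc[rule_format, of "Suc k"] kk by simp
    have r2: "in_radical C (Y (Suc k)) (Y (Suc (Suc k))) (a (Suc k))"
      using rad[rule_format, of "Suc k"] kk by simp
    have zz: "Comp C (Y (k-1)) (Y k) (Y (Suc k)) (a k) (a (k-1)) = Zero C (Y (k-1)) (Y (Suc k))"
      using w1 unfolding weak_cokernel_def by simp
    have "Comp C (Y (k-1)) (Y k) (Y (Suc k)) (Comp C (Y k) (Y k) (Y (Suc k)) (a k) \<sigma>) (a (k-1))
        = Comp C (Y (k-1)) (Y k) (Y (Suc k)) (a k) (Comp C (Y (k-1)) (Y k) (Y k) \<sigma> (a (k-1)))"
      using assoc[OF o(1) o(2) o(2) o(3) ak(2) st(1) ak(1)] by simp
    also have "\<dots> = Comp C (Y (k-1)) (Y k) (Y (Suc k)) (a k) (Comp C (Y (k-1)) (Y (k-1)) (Y k) (a (k-1)) \<tau>)"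
      using st(3) by simp
    also have "\<dots> = Comp C (Y (k-1)) (Y (k-1)) (Y (Suc k)) (Comp C (Y (k-1)) (Y k) (Y (Suc k)) (a k) (a (k-1))) \<tau>"
      using assoc[OF o(1) o(1) o(2) o(3) st(2) ak(2) ak(1)] .
    also have "\<dots> = Zero C (Y (k-1)) (Y (Suc k))" using zz comp_zero_l[OF o(1) o(1) o(3) st(2)] by simp
    finally have z2: "Comp C (Y (k-1)) (Y k) (Y (Suc k)) (Comp C (Y k) (Y k) (Y (Suc k)) (a k) \<sigma>) (a (k-1))
        = Zero C (Y (k-1)) (Y (Suc k))" .
    have hm: "Comp C (Y k) (Y k) (Y (Suc k)) (a k) \<sigma> \<in> Hom C (Y k) (Y (Suc k))"
      using o ak st comp_hom by blast
    have "\<forall>W\<in>Obj C. \<forall>h\<in>Hom C (Y k) W. Comp C (Y (k-1)) (Y k) W h (a (k-1)) = Zero C (Y (k-1)) W \<longrightarrow>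
        (\<exists>u\<in>Hom C (Y (Suc k)) W. h = Comp C (Y k) (Y (Suc k)) W u (a k))"
      using w1 unfolding weak_cokernel_def by blast
    then have "\<exists>u\<in>Hom C (Y (Suc k)) (Y (Suc k)). Comp C (Y k) (Y k) (Y (Suc k)) (a k) \<sigma> = Comp C (Y k) (Y (Suc k)) (Y (Suc k)) u (a k)"
      using o(3) hm z2 by blast
    then obtain \<sigma>' where s': "\<sigma>' \<in> Hom C (Y (Suc k)) (Y (Suc k))"
      "Comp C (Y k) (Y k) (Y (Suc k)) (a k) \<sigma> = Comp C (Y k) (Y (Suc k)) (Y (Suc k)) \<sigma>' (a k)"
      by blast
    have e1: "Comp C (Y k) (Y (Suc k)) (Y (Suc k)) (Comp C (Y (Suc k)) (Y (Suc k)) (Y (Suc k)) \<sigma>' (th (Suc k))) (a k) = a k"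
    proof -
      have "Comp C (Y k) (Y (Suc k)) (Y (Suc k)) (Comp C (Y (Suc k)) (Y (Suc k)) (Y (Suc k)) \<sigma>' (th (Suc k))) (a k)
         = Comp C (Y k) (Y (Suc k)) (Y (Suc k)) \<sigma>' (Comp C (Y k) (Y (Suc k)) (Y (Suc k)) (th (Suc k)) (a k))"
        using assoc[OF o(2) o(3) o(3) o(3) ak(1) t(2) s'(1)] by simp
      also have "\<dots> = Comp C (Y k) (Y (Suc k)) (Y (Suc k)) \<sigma>' (Comp C (Y k) (Y k) (Y (Suc k)) (a k) (th k))"
        using thsq kk by simp
      also have "\<dots> = Comp C (Y k) (Y k) (Y (Suc k)) (Comp C (Y k) (Y (Suc k)) (Y (Suc k)) \<sigma>' (a k)) (th k)"
        using assoc[OF o(2) o(2) o(3) o(3) t(1) ak(1) s'(1)] .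
      also have "\<dots> = Comp C (Y k) (Y k) (Y (Suc k)) (Comp C (Y k) (Y k) (Y (Suc k)) (a k) \<sigma>) (th k)"
        using s'(2) by simp
      also have "\<dots> = Comp C (Y k) (Y k) (Y (Suc k)) (a k) (Comp C (Y k) (Y k) (Y k) \<sigma> (th k))"
        using assoc[OF o(2) o(2) o(2) o(3) t(1) st(1) ak(1)] by simp
      also have "\<dots> = a k" using st(4) id_r[OF o(2) o(3) ak(1)] by simp
      finally show ?thesis .
    qed
    have e2: "Comp C (Y k) (Y (Suc k)) (Y (Suc k)) (Comp C (Y (Suc k)) (Y (Suc k)) (Y (Suc k)) (th (Suc k)) \<sigma>') (a k) = a k"
    proof -
      have "Comp C (Y k) (Y (Suc k)) (Y (Suc k)) (Comp C (Y (Suc k)) (Y (Suc k)) (Y (Suc k)) (th (Suc k)) \<sigma>') (a k)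
         = Comp C (Y k) (Y (Suc k)) (Y (Suc k)) (th (Suc k)) (Comp C (Y k) (Y (Suc k)) (Y (Suc k)) \<sigma>' (a k))"
        using assoc[OF o(2) o(3) o(3) o(3) ak(1) s'(1) t(2)] by simp
      also have "\<dots> = Comp C (Y k) (Y (Suc k)) (Y (Suc k)) (th (Suc k)) (Comp C (Y k) (Y k) (Y (Suc k)) (a k) \<sigma>)"
        using s'(2) by simp
      also have "\<dots> = Comp C (Y k) (Y k) (Y (Suc k)) (Comp C (Y k) (Y (Suc k)) (Y (Suc k)) (th (Suc k)) (a k)) \<sigma>"
        using assoc[OF o(2) o(2) o(3) o(3) st(1) ak(1) t(2)] .
      also have "\<dots> = Comp C (Y k) (Y k) (Y (Suc k)) (Comp C (Y k) (Y k) (Y (Suc k)) (a k) (th k)) \<sigma>"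
        using thsq kk by simp
      also have "\<dots> = Comp C (Y k) (Y k) (Y (Suc k)) (a k) (Comp C (Y k) (Y k) (Y k) (th k) \<sigma>)"
        using assoc[OF o(2) o(2) o(2) o(3) st(1) t(1) ak(1)] by simp
      also have "\<dots> = a k" using st(5) id_r[OF o(2) o(3) ak(1)] by simp
      finally show ?thesis .
    qed
    have i1: "is_iso C (Y (Suc k)) (Y (Suc k)) (Comp C (Y (Suc k)) (Y (Suc k)) (Y (Suc k)) \<sigma>' (th (Suc k)))"
      using fix_iso[OF o(2,3,4) _ w2 r2 e1] o t s' comp_hom by blast
    have i2: "is_iso C (Y (Suc k)) (Y (Suc k)) (Comp C (Y (Suc k)) (Y (Suc k)) (Y (Suc k)) (th (Suc k)) \<sigma>')"
      using fix_iso[OF o(2,3,4) _ w2 r2 e2] o t s' comp_hom by blast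
    have "is_iso C (Y (Suc k)) (Y (Suc k)) (th (Suc k))"
      using lr_iso[OF o(3,3) t(2) s'(1) i1 i2] .
    then obtain s where s: "s \<in> Hom C (Y (Suc k)) (Y (Suc k))"
      "Comp C (Y (Suc k)) (Y (Suc k)) (Y (Suc k)) s (th (Suc k)) = Id C (Y (Suc k))"
      "Comp C (Y (Suc k)) (Y (Suc k)) (Y (Suc k)) (th (Suc k)) s = Id C (Y (Suc k))"
      unfolding is_iso_def by blast
    have ta: "Comp C (Y k) (Y (Suc k)) (Y (Suc k)) (th (Suc k)) (a k) \<in> Hom C (Y k) (Y (Suc k))"
      using comp_hom[OF o(2) o(3) o(3) ak(1) t(2)] .
    have "Comp C (Y k) (Y (Suc k)) (Y (Suc k)) s (a k)
        = Comp C (Y k) (Y (Suc k)) (Y (Suc k)) s (Comp C (Y k) (Y k) (Y (Suc k)) (a k) (Comp C (Y k) (Y k) (Y k) (th k) \<sigma>))"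
      using st(5) id_r[OF o(2) o(3) ak(1)] by simp
    also have "\<dots> = Comp C (Y k) (Y (Suc k)) (Y (Suc k)) s (Comp C (Y k) (Y k) (Y (Suc k)) (Comp C (Y k) (Y k) (Y (Suc k)) (a k) (th k)) \<sigma>)"
      using assoc[OF o(2) o(2) o(2) o(3) st(1) t(1) ak(1)] by simp
    also have "\<dots> = Comp C (Y k) (Y (Suc k)) (Y (Suc k)) s (Comp C (Y k) (Y k) (Y (Suc k)) (Comp C (Y k) (Y (Suc k)) (Y (Suc k)) (th (Suc k)) (a k)) \<sigma>)"
      using thsq kk by simp
    also have "\<dots> = Comp C (Y k) (Y k) (Y (Suc k)) (Comp C (Y k) (Y (Suc k)) (Y (Suc k)) s (Comp C (Y k) (Y (Suc k)) (Y (Suc k)) (th (Suc k)) (a k))) \<sigma>"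
      using assoc[OF o(2) o(2) o(3) o(3) st(1) ta s(1)] .
    also have "\<dots> = Comp C (Y k) (Y k) (Y (Suc k)) (Comp C (Y k) (Y (Suc k)) (Y (Suc k)) (Comp C (Y (Suc k)) (Y (Suc k)) (Y (Suc k)) s (th (Suc k))) (a k)) \<sigma>"
      using assoc[OF o(2) o(3) o(3) o(3) ak(1) t(2) s(1)] by simp
    also have "\<dots> = Comp C (Y k) (Y k) (Y (Suc k)) (a k) \<sigma>" using s(2) id_l[OF o(2) o(3) ak(1)] by simp
    finally have "Comp C (Y k) (Y (Suc k)) (Y (Suc k)) s (a k) = Comp C (Y k) (Y k) (Y (Suc k)) (a k) \<sigma>" .
    then show ?case using s(1,2,3) st(1) unfolding k_def[symmetric] by blast
  qed
  show ?thesis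
  proof (intro allI impI)
    fix k assume k: "2 \<le> k \<and> k \<le> n - 1"
    then obtain j where j: "k = Suc (Suc j)" by (metis add_2_eq_Suc le_Suc_ex)
    then obtain \<sigma> where "\<sigma> \<in> Hom C (Y k) (Y k)" "Comp C (Y k) (Y k) (Y k) \<sigma> (th k) = Id C (Y k)"
      "Comp C (Y k) (Y k) (Y k) (th k) \<sigma> = Id C (Y k)" using P[of j] k unfolding j by blast
    then show "is_iso C (Y k) (Y k) (th k)" unfolding is_iso_def using thhom k by blast
  qed
qed

end

theorem mainTheorem2:
  fixes C :: "('o, 'm, 'x) addcat_scheme"
    and n :: nat
    and X X' :: "nat \<Rightarrow> 'o"
    and f g \<phi> :: "nat \<Rightarrow> 'm"
  assumes add: "is_additive_category C"
    and n2: "n \<ge> 2"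
    and objX: "\<forall>i\<le>n. X i \<in> Obj C"
    and objX': "\<forall>i\<le>n. X' i \<in> Obj C"
    and X'0: "X' 0 = X 0" and X'1: "X' 1 = X 1"
    and g0: "g 0 = f 0"
    and homf: "\<forall>i<n. f i \<in> Hom C (X i) (X (Suc i))"
    and homg: "\<forall>i<n. g i \<in> Hom C (X' i) (X' (Suc i))"
    and homphi: "\<forall>k. 2 \<le> k \<and> k \<le> n \<longrightarrow> \<phi> k \<in> Hom C (X k) (X' k)"
    and sq2: "Comp C (X 1) (X 2) (X' 2) (\<phi> 2) (f 1) = g 1"
    and sq: "\<forall>k. 2 \<le> k \<and> k \<le> n - 1 \<longrightarrow>
               Comp C (X k) (X (Suc k)) (X' (Suc k)) (\<phi> (Suc k)) (f k)
             = Comp C (X k) (X' k) (X' (Suc k)) (g k) (\<phi> k)"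
    and wcf: "\<forall>i. 1 \<le> i \<and> i \<le> n - 1 \<longrightarrow>
               weak_cokernel C (X (i - 1)) (X i) (X (Suc i)) (f (i - 1)) (f i)"
    and wcg: "\<forall>i. 1 \<le> i \<and> i \<le> n - 1 \<longrightarrow>
               weak_cokernel C (X' (i - 1)) (X' i) (X' (Suc i)) (g (i - 1)) (g i)"
    and radf: "\<forall>i. 2 \<le> i \<and> i \<le> n - 1 \<longrightarrow> in_radical C (X i) (X (Suc i)) (f i)"
    and radg: "\<forall>i. 2 \<le> i \<and> i \<le> n - 1 \<longrightarrow> in_radical C (X' i) (X' (Suc i)) (g i)"
  shows "\<forall>k. 2 \<le> k \<and> k \<le> n - 1 \<longrightarrow> is_iso C (X k) (X' k) (\<phi> k)"
proof -
  interpret PA C using add unfolding is_additive_category_def by unfold_locales blast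
  show ?thesis
  proof (cases "n \<le> 2")
    case True then show ?thesis by auto
  next
    case False
    hence n3: "3 \<le> n" by simp
    have X'1': "X' (Suc 0) = X (Suc 0)" using X'1 by simp
    have R: "Suc (Suc j) \<le> n - 1 \<Longrightarrow> \<exists>\<psi>. \<forall>k. 2 \<le> k \<and> k \<le> Suc (Suc j) \<longrightarrow>
        \<psi> k \<in> Hom C (X' k) (X k) \<and>
        (k = 2 \<longrightarrow> Comp C (X 1) (X' 2) (X 2) (\<psi> 2) (g 1) = f 1) \<and>
        (Suc k \<le> Suc (Suc j) \<longrightarrow> Comp C (X' k) (X' (Suc k)) (X (Suc k)) (\<psi> (Suc k)) (g k)
             = Comp C (X' k) (X k) (X (Suc k)) (f k) (\<psi> k))" for j
    proof (induction j)
      case 0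
      have w1: "weak_cokernel C (X 0) (X 1) (X 2) (f 0) (f 1)"
        using wcf[rule_format, of 1] 0 by (simp add: numeral_2_eq_2)
      have w1': "weak_cokernel C (X 0) (X 1) (X' 2) (f 0) (g 1)"
        using wcg[rule_format, of 1] 0 X'0 X'1 g0 by (simp add: numeral_2_eq_2)
      have f10: "Comp C (X 0) (X 1) (X 2) (f 1) (f 0) = Zero C (X 0) (X 2)"
        using w1 unfolding weak_cokernel_def by simp
      have f1: "f 1 \<in> Hom C (X 1) (X 2)" using w1 unfolding weak_cokernel_def by simp
      have fac: "\<forall>W\<in>Obj C. \<forall>h\<in>Hom C (X 1) W. Comp C (X 0) (X 1) W h (f 0) = Zero C (X 0) W \<longrightarrow>
        (\<exists>u\<in>Hom C (X' 2) W. h = Comp C (X 1) (X' 2) W u (g 1))"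
        using w1' unfolding weak_cokernel_def by simp
      have "X 2 \<in> Obj C" using objX n3 by simp
      then obtain u where u: "u \<in> Hom C (X' 2) (X 2)" "f 1 = Comp C (X 1) (X' 2) (X 2) u (g 1)"
        using fac f1 f10 by auto
      show ?case
        apply (rule exI[of _ "\<lambda>_. u"])
        apply (intro allI impI)
        subgoal for k using u by (subgoal_tac "k = 2") auto
        done
    next
      case (Suc j)
      define m where "m = Suc (Suc j)"
      have mm: "2 \<le> m" "Suc m \<le> n - 1" using Suc.prems m_def by auto
      obtain \<psi> where ps: "\<forall>k. 2 \<le> k \<and> k \<le> m \<longrightarrow>
        \<psi> k \<in> Hom C (X' k) (X k) \<and>
        (k = 2 \<longrightarrow> Comp C (X 1) (X' 2) (X 2) (\<psi> 2) (g 1) = f 1) \<and>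
        (Suc k \<le> m \<longrightarrow> Comp C (X' k) (X' (Suc k)) (X (Suc k)) (\<psi> (Suc k)) (g k)
             = Comp C (X' k) (X k) (X (Suc k)) (f k) (\<psi> k))"
        using Suc m_def by auto
      have o: "X' (m-1) \<in> Obj C" "X' m \<in> Obj C" "X (m-1) \<in> Obj C" "X m \<in> Obj C" "X (Suc m) \<in> Obj C"
        "X' (Suc m) \<in> Obj C"
        using objX[rule_format, of "m-1"] objX[rule_format, of m] objX[rule_format, of "Suc m"]
          objX'[rule_format, of "m-1"] objX'[rule_format, of m] objX'[rule_format, of "Suc m"] mm by auto
      have pm: "\<psi> m \<in> Hom C (X' m) (X m)" using ps[rule_format, of m] mm by simp
      have fm: "f m \<in> Hom C (X m) (X (Suc m))" using homf[rule_format, of m] mm by simp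
      have wg: "weak_cokernel C (X' (m-1)) (X' m) (X' (Suc m)) (g (m-1)) (g m)"
        using wcg[rule_format, of m] mm by simp
      have wf: "weak_cokernel C (X (m-1)) (X m) (X (Suc m)) (f (m-1)) (f m)"
        using wcf[rule_format, of m] mm by simp
      have gm1: "g (m-1) \<in> Hom C (X' (m-1)) (X' m)" using wg unfolding weak_cokernel_def by simp
      have fm1: "f (m-1) \<in> Hom C (X (m-1)) (X m)" using wf unfolding weak_cokernel_def by simp
      have ffz: "Comp C (X (m-1)) (X m) (X (Suc m)) (f m) (f (m-1)) = Zero C (X (m-1)) (X (Suc m))"
        using wf unfolding weak_cokernel_def by simp
      have key: "Comp C (X' (m-1)) (X' m) (X (Suc m)) (Comp C (X' m) (X m) (X (Suc m)) (f m) (\<psi> m)) (g (m-1))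
          = Zero C (X' (m-1)) (X (Suc m))"
      proof (cases "m = 2")
        case True
        have e: "X' (m-1) = X (m-1)" "m - 1 = 1" using True X'1 by auto
        have "Comp C (X' (m-1)) (X' m) (X (Suc m)) (Comp C (X' m) (X m) (X (Suc m)) (f m) (\<psi> m)) (g (m-1))
          = Comp C (X' (m-1)) (X m) (X (Suc m)) (f m) (Comp C (X' (m-1)) (X' m) (X m) (\<psi> m) (g (m-1)))"
          using assoc[OF o(1) o(2) o(4) o(5) gm1 pm fm] by simp
        also have "\<dots> = Comp C (X (m-1)) (X m) (X (Suc m)) (f m) (f (m-1))"
        proof -
          have "Comp C (X 1) (X' 2) (X 2) (\<psi> 2) (g 1) = f 1" using ps[rule_format, of 2] mm by simp
          then have "Comp C (X' (m-1)) (X' m) (X m) (\<psi> m) (g (m-1)) = f (m-1)" using True X'1 by simp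
          then show ?thesis using e by simp
        qed
        also have "\<dots> = Zero C (X' (m-1)) (X (Suc m))" using ffz e by simp
        finally show ?thesis .
      next
        case False
        have e: "Suc (m-1) = m" "2 \<le> m - 1" using False mm by auto
        have pm1: "\<psi> (m-1) \<in> Hom C (X' (m-1)) (X (m-1))" using ps[rule_format, of "m-1"] e mm by simp
        have sq1: "Comp C (X' (m-1)) (X' m) (X m) (\<psi> m) (g (m-1))
             = Comp C (X' (m-1)) (X (m-1)) (X m) (f (m-1)) (\<psi> (m-1))"
          using ps[rule_format, of "m-1"] e by simp
        have "Comp C (X' (m-1)) (X' m) (X (Suc m)) (Comp C (X' m) (X m) (X (Suc m)) (f m) (\<psi> m)) (g (m-1))
          = Comp C (X' (m-1)) (X m) (X (Suc m)) (f m) (Comp C (X' (m-1)) (X' m) (X m) (\<psi> m) (g (m-1)))"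
          using assoc[OF o(1) o(2) o(4) o(5) gm1 pm fm] by simp
        also have "\<dots> = Comp C (X' (m-1)) (X m) (X (Suc m)) (f m) (Comp C (X' (m-1)) (X (m-1)) (X m) (f (m-1)) (\<psi> (m-1)))"
          using sq1 by simp
        also have "\<dots> = Comp C (X' (m-1)) (X (m-1)) (X (Suc m)) (Comp C (X (m-1)) (X m) (X (Suc m)) (f m) (f (m-1))) (\<psi> (m-1))"
          using assoc[OF o(1) o(3) o(4) o(5) pm1 fm1 fm] .
        also have "\<dots> = Zero C (X' (m-1)) (X (Suc m))" using ffz comp_zero_l[OF o(1) o(3) o(5) pm1] by simp
        finally show ?thesis .
      qed
      have hm: "Comp C (X' m) (X m) (X (Suc m)) (f m) (\<psi> m) \<in> Hom C (X' m) (X (Suc m))"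
        using comp_hom[OF o(2) o(4) o(5) pm fm] .
      have fac: "\<forall>W\<in>Obj C. \<forall>h\<in>Hom C (X' m) W. Comp C (X' (m-1)) (X' m) W h (g (m-1)) = Zero C (X' (m-1)) W \<longrightarrow>
        (\<exists>u\<in>Hom C (X' (Suc m)) W. h = Comp C (X' m) (X' (Suc m)) W u (g m))"
        using wg unfolding weak_cokernel_def by simp
      obtain u where u: "u \<in> Hom C (X' (Suc m)) (X (Suc m))"
        "Comp C (X' m) (X m) (X (Suc m)) (f m) (\<psi> m) = Comp C (X' m) (X' (Suc m)) (X (Suc m)) u (g m)"
        using fac o(5) hm key by blast
      have "\<forall>k. 2 \<le> k \<and> k \<le> Suc m \<longrightarrow>
        (\<psi>(Suc m := u)) k \<in> Hom C (X' k) (X k) \<and>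
        (k = 2 \<longrightarrow> Comp C (X 1) (X' 2) (X 2) ((\<psi>(Suc m := u)) 2) (g 1) = f 1) \<and>
        (Suc k \<le> Suc m \<longrightarrow> Comp C (X' k) (X' (Suc k)) (X (Suc k)) ((\<psi>(Suc m := u)) (Suc k)) (g k)
             = Comp C (X' k) (X k) (X (Suc k)) (f k) ((\<psi>(Suc m := u)) k))"
      proof (intro allI impI)
        fix k assume k: "2 \<le> k \<and> k \<le> Suc m"
        show "(\<psi>(Suc m := u)) k \<in> Hom C (X' k) (X k) \<and>
        (k = 2 \<longrightarrow> Comp C (X 1) (X' 2) (X 2) ((\<psi>(Suc m := u)) 2) (g 1) = f 1) \<and>
        (Suc k \<le> Suc m \<longrightarrow> Comp C (X' k) (X' (Suc k)) (X (Suc k)) ((\<psi>(Suc m := u)) (Suc k)) (g k)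
             = Comp C (X' k) (X k) (X (Suc k)) (f k) ((\<psi>(Suc m := u)) k))"
        proof (cases "k = Suc m")
          case True then show ?thesis using u mm by auto
        next
          case False
          hence km: "k \<le> m" using k by simp
          have A: "(\<psi>(Suc m := u)) k = \<psi> k" using km by simp
          show ?thesis
          proof (cases "Suc k = Suc m")
            case True
            hence "k = m" by simp
            then show ?thesis using ps[rule_format, of k] k u mm by auto
          next
            case False
            then show ?thesis using ps[rule_format, of k] k km A mm by auto
          qed
        qed
      qed
      then show ?case unfolding m_def by blast
    qed
    obtain \<psi> where ps: "\<forall>k. 2 \<le> k \<and> k \<le> n - 1 \<longrightarrow>
        \<psi> k \<in> Hom C (X' k) (X k) \<and>
        (k = 2 \<longrightarrow> Comp C (X 1) (X' 2) (X 2) (\<psi> 2) (g 1) = f 1) \<and>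
        (Suc k \<le> n - 1 \<longrightarrow> Comp C (X' k) (X' (Suc k)) (X (Suc k)) (\<psi> (Suc k)) (g k)
             = Comp C (X' k) (X k) (X (Suc k)) (f k) (\<psi> k))"
    proof -
      have e: "Suc (Suc (n - 3)) = n - 1" using n3 by simp
      note ex = R[of "n - 3", unfolded e, OF le_refl]
      show ?thesis using ex by (elim exE) (rule that)
    qed
    have psk: "\<And>k. 2 \<le> k \<Longrightarrow> k \<le> n-1 \<Longrightarrow> \<psi> k \<in> Hom C (X' k) (X k)" using ps by blast
    have psi2: "Comp C (X 1) (X' 2) (X 2) (\<psi> 2) (g 1) = f 1" using ps[rule_format, of 2] n3 by simp
    have pssq: "\<And>k. 2 \<le> k \<Longrightarrow> Suc k \<le> n-1 \<Longrightarrow> Comp C (X' k) (X' (Suc k)) (X (Suc k)) (\<psi> (Suc k)) (g k)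
             = Comp C (X' k) (X k) (X (Suc k)) (f k) (\<psi> k)" using ps by simp
    have oX: "\<And>k. k \<le> n \<Longrightarrow> X k \<in> Obj C" and oX': "\<And>k. k \<le> n \<Longrightarrow> X' k \<in> Obj C"
      using objX objX' by blast+
    have hf: "\<And>k. k < n \<Longrightarrow> f k \<in> Hom C (X k) (X (Suc k))" using homf by blast
    have hg: "\<And>k. k < n \<Longrightarrow> g k \<in> Hom C (X' k) (X' (Suc k))" using homg by blast
    have hp: "\<And>k. 2 \<le> k \<Longrightarrow> k \<le> n \<Longrightarrow> \<phi> k \<in> Hom C (X k) (X' k)" using homphi by blast
    have sqk: "\<And>k. 2 \<le> k \<Longrightarrow> k \<le> n - 1 \<Longrightarrow> Comp C (X k) (X (Suc k)) (X' (Suc k)) (\<phi> (Suc k)) (f k)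
             = Comp C (X k) (X' k) (X' (Suc k)) (g k) (\<phi> k)" using sq by blast
    have o1: "X 1 \<in> Obj C" "X 2 \<in> Obj C" "X' 2 \<in> Obj C" using oX oX' n3 by auto
    have f1: "f 1 \<in> Hom C (X 1) (X 2)" using hf[of 1] n3 by (simp add: numeral_2_eq_2)
    have g1: "g 1 \<in> Hom C (X 1) (X' 2)" using hg[of 1] n3 X'1 by (simp add: numeral_2_eq_2)
    have p2: "\<phi> 2 \<in> Hom C (X 2) (X' 2)" using hp[of 2] n3 by simp
    have q2: "\<psi> 2 \<in> Hom C (X' 2) (X 2)" using psk[of 2] n3 by simp
    define th where "th k = Comp C (X k) (X' k) (X k) (\<psi> k) (\<phi> k)" for k
    define th' where "th' k = Comp C (X' k) (X k) (X' k) (\<phi> k) (\<psi> k)" for k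
    have I1: "\<forall>k. 2\<le>k \<and> k\<le>n-1 \<longrightarrow> is_iso C (X k) (X k) (th k)"
    proof (rule ladder_iso[OF objX homf wcf radf])
      show "\<forall>k. 2\<le>k \<and> k \<le> n-1 \<longrightarrow> th k \<in> Hom C (X k) (X k)"
      proof (intro allI impI)
        fix k assume k: "2 \<le> k \<and> k \<le> n - 1"
        then show "th k \<in> Hom C (X k) (X k)"
          unfolding th_def using comp_hom[OF oX[of k] oX'[of k] oX[of k] hp[of k] psk[of k]]
            comp_hom[OF oX'[of k] oX[of k] oX'[of k] psk[of k] hp[of k]] by auto
      qed
      show "Comp C (X 1) (X 2) (X 2) (th 2) (f 1) = f 1"
        unfolding th_def using assoc[OF o1(1) o1(2) o1(3) o1(2) f1 p2 q2, symmetric] sq2 psi2 by simp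
      show "\<forall>k. 2\<le>k \<and> Suc k \<le> n-1 \<longrightarrow> Comp C (X k) (X (Suc k)) (X (Suc k)) (th (Suc k)) (f k)
               = Comp C (X k) (X k) (X (Suc k)) (f k) (th k)"
      proof (intro allI impI)
        fix k assume k: "2 \<le> k \<and> Suc k \<le> n - 1"
        have o: "X k \<in> Obj C" "X' k \<in> Obj C" "X (Suc k) \<in> Obj C" "X' (Suc k) \<in> Obj C"
          using oX oX' k by auto
        have h: "f k \<in> Hom C (X k) (X (Suc k))" "g k \<in> Hom C (X' k) (X' (Suc k))"
          "\<phi> k \<in> Hom C (X k) (X' k)" "\<phi> (Suc k) \<in> Hom C (X (Suc k)) (X' (Suc k))"
          "\<psi> k \<in> Hom C (X' k) (X k)" "\<psi> (Suc k) \<in> Hom C (X' (Suc k)) (X (Suc k))"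
          using hf hg hp psk k by auto
        have "Comp C (X k) (X (Suc k)) (X (Suc k)) (th (Suc k)) (f k)
            = Comp C (X k) (X' (Suc k)) (X (Suc k)) (\<psi> (Suc k)) (Comp C (X k) (X (Suc k)) (X' (Suc k)) (\<phi> (Suc k)) (f k))"
          unfolding th_def using assoc[OF o(1) o(3) o(4) o(3) h(1) h(4) h(6)] by simp
        also have "\<dots> = Comp C (X k) (X' (Suc k)) (X (Suc k)) (\<psi> (Suc k)) (Comp C (X k) (X' k) (X' (Suc k)) (g k) (\<phi> k))"
          using sqk k by simp
        also have "\<dots> = Comp C (X k) (X' k) (X (Suc k)) (Comp C (X' k) (X' (Suc k)) (X (Suc k)) (\<psi> (Suc k)) (g k)) (\<phi> k)"
          using assoc[OF o(1) o(2) o(4) o(3) h(3) h(2) h(6)] .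
        also have "\<dots> = Comp C (X k) (X' k) (X (Suc k)) (Comp C (X' k) (X k) (X (Suc k)) (f k) (\<psi> k)) (\<phi> k)"
          using pssq k by simp
        also have "\<dots> = Comp C (X k) (X k) (X (Suc k)) (f k) (th k)"
          unfolding th_def using assoc[OF o(1) o(2) o(1) o(3) h(3) h(5) h(1)] by simp
        finally show "Comp C (X k) (X (Suc k)) (X (Suc k)) (th (Suc k)) (f k)
               = Comp C (X k) (X k) (X (Suc k)) (f k) (th k)" .
      qed
    qed
    have I2: "\<forall>k. 2\<le>k \<and> k\<le>n-1 \<longrightarrow> is_iso C (X' k) (X' k) (th' k)"
    proof (rule ladder_iso[OF objX' homg wcg radg])
      show "\<forall>k. 2\<le>k \<and> k \<le> n-1 \<longrightarrow> th' k \<in> Hom C (X' k) (X' k)"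
      proof (intro allI impI)
        fix k assume k: "2 \<le> k \<and> k \<le> n - 1"
        then show "th' k \<in> Hom C (X' k) (X' k)"
          unfolding th'_def using comp_hom[OF oX[of k] oX'[of k] oX[of k] hp[of k] psk[of k]]
            comp_hom[OF oX'[of k] oX[of k] oX'[of k] psk[of k] hp[of k]] by auto
      qed
      show "Comp C (X' 1) (X' 2) (X' 2) (th' 2) (g 1) = g 1"
        unfolding th'_def X'1 using assoc[OF o1(1) o1(3) o1(2) o1(3) g1 q2 p2, symmetric] sq2 psi2 by simp
      show "\<forall>k. 2\<le>k \<and> Suc k \<le> n-1 \<longrightarrow> Comp C (X' k) (X' (Suc k)) (X' (Suc k)) (th' (Suc k)) (g k)
               = Comp C (X' k) (X' k) (X' (Suc k)) (g k) (th' k)"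
      proof (intro allI impI)
        fix k assume k: "2 \<le> k \<and> Suc k \<le> n - 1"
        have o: "X k \<in> Obj C" "X' k \<in> Obj C" "X (Suc k) \<in> Obj C" "X' (Suc k) \<in> Obj C"
          using oX oX' k by auto
        have h: "f k \<in> Hom C (X k) (X (Suc k))" "g k \<in> Hom C (X' k) (X' (Suc k))"
          "\<phi> k \<in> Hom C (X k) (X' k)" "\<phi> (Suc k) \<in> Hom C (X (Suc k)) (X' (Suc k))"
          "\<psi> k \<in> Hom C (X' k) (X k)" "\<psi> (Suc k) \<in> Hom C (X' (Suc k)) (X (Suc k))"
          using hf hg hp psk k by auto
        have "Comp C (X' k) (X' (Suc k)) (X' (Suc k)) (th' (Suc k)) (g k)
            = Comp C (X' k) (X (Suc k)) (X' (Suc k)) (\<phi> (Suc k)) (Comp C (X' k) (X' (Suc k)) (X (Suc k)) (\<psi> (Suc k)) (g k))"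
          unfolding th'_def using assoc[OF o(2) o(4) o(3) o(4) h(2) h(6) h(4)] by simp
        also have "\<dots> = Comp C (X' k) (X (Suc k)) (X' (Suc k)) (\<phi> (Suc k)) (Comp C (X' k) (X k) (X (Suc k)) (f k) (\<psi> k))"
          using pssq k by simp
        also have "\<dots> = Comp C (X' k) (X k) (X' (Suc k)) (Comp C (X k) (X (Suc k)) (X' (Suc k)) (\<phi> (Suc k)) (f k)) (\<psi> k)"
          using assoc[OF o(2) o(1) o(3) o(4) h(5) h(1) h(4)] .
        also have "\<dots> = Comp C (X' k) (X k) (X' (Suc k)) (Comp C (X k) (X' k) (X' (Suc k)) (g k) (\<phi> k)) (\<psi> k)"
          using sqk k by simp
        also have "\<dots> = Comp C (X' k) (X' k) (X' (Suc k)) (g k) (th' k)"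
          unfolding th'_def using assoc[OF o(2) o(1) o(2) o(4) h(5) h(3) h(2)] by simp
        finally show "Comp C (X' k) (X' (Suc k)) (X' (Suc k)) (th' (Suc k)) (g k)
               = Comp C (X' k) (X' k) (X' (Suc k)) (g k) (th' k)" .
      qed
    qed
    show ?thesis
    proof (intro allI impI)
      fix k assume k: "2 \<le> k \<and> k \<le> n - 1"
      have o: "X k \<in> Obj C" "X' k \<in> Obj C" using oX oX' k by auto
      show "is_iso C (X k) (X' k) (\<phi> k)"
      proof (rule lr_iso[OF o(1) o(2) hp[of k] psk[of k]])
        show "2 \<le> k" "k \<le> n" "2 \<le> k" "k \<le> n - 1" using k by auto
        show "is_iso C (X k) (X k) (Comp C (X k) (X' k) (X k) (\<psi> k) (\<phi> k))"
          using I1 k unfolding th_def by blast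
        show "is_iso C (X' k) (X' k) (Comp C (X' k) (X k) (X' k) (\<phi> k) (\<psi> k))"
          using I2 k unfolding th'_def by blast
      qed
    qed
  qed
qed

end
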